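(* Let $\mu_Y\in\mathbb{R}$, $\sigma_Y>0$, $n\ge 2$, and let $X_1,\dots,X_n$ be i.i.d. random variables with $X_i\sim LN(\mu_Y,\sigma_Y^2)$. Let $A_n=\frac1n\sum_{i=1}^n X_i$, $H_n=n\big/\sum_{i=1}^n (1/X_i)$ and $K_n=\frac{A_n}{H_n}-1$. Then $$E(K_n)=\frac{n-1}{n}\,k=\frac{n-1}{n}\,C_v^2,$$ where $k=C_v^2=\exp(\sigma_Y^2)-1$.
   Context: $X\sim LN(\mu_Y,\sigma_Y^2)$ means $\ln X\sim N(\mu_Y,\sigma_Y^2)$, i.e. $X$ has density $f(x)=\frac{1}{x\sigma_Y\sqrt{2\pi}}\exp\!\big(-\frac{(\ln x-\mu_Y)^2}{2\sigma_Y^2}\big)$ for $x>0$. For such $X$, $\alpha=E[X]$ is the arithmetic mean, $\beta^2=E[(X-\alpha)^2]$ the variance, $C_v=\beta/\alpha$ the coefficient of variation, $h=1/E[1/X]$ the harmonic mean, and $k=\alpha/h-1$ the relative ratio; one has $k=C_v^2=\exp(\sigma_Y^2)-1$. $A_n$ is the sample arithmetic mean, $H_n$ the sample harmonic mean, and $K_n$ the sample relative ratio. *)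

theory Defs
  imports "HOL-Probability.Probability"
begin

definition lognormal_density :: "real \<Rightarrow> real \<Rightarrow> real \<Rightarrow> real" where
  "lognormal_density \<mu> \<sigma> x =
     (if x > 0 then exp (- ((ln x - \<mu>)\<^sup>2) / (2 * \<sigma>\<^sup>2)) / (x * \<sigma> * sqrt (2 * pi)) else 0)"

end

theory Submission
  imports Defs
begin


lemma exp_subst_nn:
  fixes f :: "real \<Rightarrow> real"
  assumes Mf[measurable]: "f \<in> borel_measurable borel"
  shows "(\<integral>\<^sup>+x. ennreal (f x) * indicator {0<..} x \<partial>lborel) = (\<integral>\<^sup>+y. ennreal (f (exp y) * exp y) \<partial>lborel)"
proof -
  have 1: "(\<integral>\<^sup>+x. ennreal (f x) * indicator {exp (- real N)..exp (real N)} x \<partial>lborel) =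
     (\<integral>\<^sup>+y. ennreal (f (exp y) * exp y) * indicator {- real N..real N} y \<partial>lborel)" for N :: nat
  proof -
    have "(\<integral>\<^sup>+x. ennreal (f x) * indicator {exp (- real N)..exp (real N)} x \<partial>lborel) =
      (\<integral>\<^sup>+x. ennreal (f x * indicator {exp (- real N)..exp (real N)} x) \<partial>lborel)"
      by (intro nn_integral_cong) (auto split: split_indicator)
    also have "\<dots> =
     (\<integral>\<^sup>+y. ennreal (f (exp y) * exp y * indicator {- real N..real N} y) \<partial>lborel)"
      by (rule nn_integral_substitution[where g=exp and g'=exp and a="- real N" and b="real N"]) (simp add: set_borel_measurable_def, auto intro!: DERIV_exp continuous_on_exp continuous_on_id)
    also have "\<dots> = (\<integral>\<^sup>+y. ennreal (f (exp y) * exp y) * indicator {- real N..real N} y \<partial>lborel)"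
      by (intro nn_integral_cong) (auto split: split_indicator)
    finally show ?thesis .
  qed
  have L: "(\<integral>\<^sup>+x. ennreal (f x) * indicator {0<..} x \<partial>lborel) =
      (SUP N. \<integral>\<^sup>+x. ennreal (f x) * indicator {exp (- real N)..exp (real N)} x \<partial>lborel)"
  proof -
    have "(\<integral>\<^sup>+x. ennreal (f x) * indicator {0<..} x \<partial>lborel) =
      (\<integral>\<^sup>+x. (SUP N. ennreal (f x) * indicator {exp (- real N)..exp (real N)} x) \<partial>lborel)"
    proof (intro nn_integral_cong)
      fix x :: real
      show "ennreal (f x) * indicator {0<..} x = (SUP N. ennreal (f x) * indicator {exp (- real N)..exp (real N)} x)"
      proof (cases "x > 0")
        case True
        obtain N :: nat where N: "\<bar>ln x\<bar> \<le> real N" using real_arch_simple by blast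
        have "exp (- real N) \<le> x" using N True by (metis abs_le_iff exp_le_cancel_iff exp_ln minus_le_iff)
        moreover have "x \<le> exp (real N)" using N True by (metis abs_le_iff exp_le_cancel_iff exp_ln)
        ultimately have "ennreal (f x) * indicator {exp (- real N)..exp (real N)} x = ennreal (f x)" by simp
        then have "ennreal (f x) \<le> (SUP N. ennreal (f x) * indicator {exp (- real N)..exp (real N)} x)"
          by (intro SUP_upper2[of N]) simp_all
        moreover have "(SUP N. ennreal (f x) * indicator {exp (- real N)..exp (real N)} x) \<le> ennreal (f x)"
          by (intro SUP_least) (auto split: split_indicator)
        ultimately show ?thesis using True by (auto intro: antisym)
      next
        case False
        then have "\<And>N::nat. x \<notin> {exp (- real N)..exp (real N)}" by (metis False atLeastAtMost_iff exp_gt_zero order.strict_trans2)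
        then show ?thesis using False by simp
      qed
    qed
    also have "\<dots> = (SUP N. \<integral>\<^sup>+x. ennreal (f x) * indicator {exp (- real N)..exp (real N)} x \<partial>lborel)"
    proof (rule nn_integral_monotone_convergence_SUP)
      have mono: "exp (- real n) \<le> x \<and> x \<le> exp (real n)"
        if "m \<le> n" "exp (- real m) \<le> x" "x \<le> exp (real m)" for m n :: nat and x :: real
      proof -
        have "exp (- real n) \<le> exp (- real m)" "exp (real m) \<le> exp (real n)" using that(1) by auto
        then show ?thesis using that by linarith
      qed
      show "incseq (\<lambda>N x. ennreal (f x) * indicator {exp (- real N)..exp (real N)} x)"
        unfolding incseq_def le_fun_def
        by (auto split: split_indicator dest: mono)
    qed simp
    finally show ?thesis .
  qed
  have R: "(\<integral>\<^sup>+y. ennreal (f (exp y) * exp y) \<partial>lborel) =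
      (SUP N. \<integral>\<^sup>+y. ennreal (f (exp y) * exp y) * indicator {- real N..real N} y \<partial>lborel)"
  proof -
    have "(\<integral>\<^sup>+y. ennreal (f (exp y) * exp y) \<partial>lborel) =
      (\<integral>\<^sup>+y. (SUP N. ennreal (f (exp y) * exp y) * indicator {- real N..real N} y) \<partial>lborel)"
    proof (intro nn_integral_cong)
      fix y :: real
      obtain N :: nat where N: "\<bar>y\<bar> \<le> real N" using real_arch_simple by blast
      have "ennreal (f (exp y) * exp y) * indicator {- real N..real N} y = ennreal (f (exp y) * exp y)" using N by (simp add: abs_le_iff indicator_def)
      then have "ennreal (f (exp y) * exp y) \<le> (SUP N. ennreal (f (exp y) * exp y) * indicator {- real N..real N} y)"
        by (intro SUP_upper2[of N]) simp_all
      moreover have "(SUP N. ennreal (f (exp y) * exp y) * indicator {- real N..real N} y) \<le> ennreal (f (exp y) * exp y)"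
        by (intro SUP_least) (auto split: split_indicator)
      ultimately show "ennreal (f (exp y) * exp y) = (SUP N. ennreal (f (exp y) * exp y) * indicator {- real N..real N} y)"
        by (auto intro: antisym)
    qed
    also have "\<dots> = (SUP N. \<integral>\<^sup>+y. ennreal (f (exp y) * exp y) * indicator {- real N..real N} y \<partial>lborel)"
      by (rule nn_integral_monotone_convergence_SUP)
        (auto simp: incseq_def le_fun_def split: split_indicator intro!: mult_left_mono)
    finally show ?thesis .
  qed
  show ?thesis using L R 1 by simp
qed


lemma lognormal_density_nonneg: "\<sigma> > 0 \<Longrightarrow> 0 \<le> lognormal_density \<mu> \<sigma> x"
  by (simp add: lognormal_density_def)

lemma borel_measurable_lognormal_density[measurable]: "lognormal_density \<mu> \<sigma> \<in> borel_measurable borel"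
  unfolding lognormal_density_def[abs_def] by measurable

lemma lognormal_exp_eq:
  assumes "\<sigma> > 0"
  shows "lognormal_density \<mu> \<sigma> (exp y) * exp y powr p * exp y =
         exp (p * \<mu> + p\<^sup>2 * \<sigma>\<^sup>2 / 2) * normal_density (\<mu> + p * \<sigma>\<^sup>2) \<sigma> y"
proof -
  have s: "sqrt (2 * pi * \<sigma>\<^sup>2) = \<sigma> * sqrt (2 * pi)" using assms
    by (simp add: real_sqrt_mult)
  have ex: "- (y - \<mu>)\<^sup>2 / (2 * \<sigma>\<^sup>2) + p * y = (p * \<mu> + p\<^sup>2 * \<sigma>\<^sup>2 / 2) + (- (y - (\<mu> + p * \<sigma>\<^sup>2))\<^sup>2 / (2 * \<sigma>\<^sup>2))"
    using assms by (simp add: field_simps power2_eq_square)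
  have e: "exp (- (y - \<mu>)\<^sup>2 / (2 * \<sigma>\<^sup>2)) * exp (p * y) =
      exp (p * \<mu> + p\<^sup>2 * \<sigma>\<^sup>2 / 2) * exp (- (y - (\<mu> + p * \<sigma>\<^sup>2))\<^sup>2 / (2 * \<sigma>\<^sup>2))"
    by (metis ex exp_add)
  have "lognormal_density \<mu> \<sigma> (exp y) * exp y powr p * exp y =
     exp (- (y - \<mu>)\<^sup>2 / (2 * \<sigma>\<^sup>2)) * exp (p * y) / (\<sigma> * sqrt (2 * pi))"
    using assms by (simp add: lognormal_density_def powr_def field_simps)
  also have "\<dots> = exp (p * \<mu> + p\<^sup>2 * \<sigma>\<^sup>2 / 2) * normal_density (\<mu> + p * \<sigma>\<^sup>2) \<sigma> y"
    unfolding e normal_density_def s by simp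
  finally show ?thesis .
qed

lemma (in prob_space) lognormal_moment:
  fixes X :: "'a \<Rightarrow> real" and g :: "real \<Rightarrow> real"
  assumes sig: "\<sigma> > 0" and D: "distributed M lborel X (lognormal_density \<mu> \<sigma>)"
    and g[measurable]: "g \<in> borel_measurable borel" and gp: "\<And>x. x > 0 \<Longrightarrow> g x = x powr p"
  shows "AE \<omega> in M. X \<omega> > 0"
    and "integrable M (\<lambda>\<omega>. g (X \<omega>))"
    and "expectation (\<lambda>\<omega>. g (X \<omega>)) = exp (p * \<mu> + p\<^sup>2 * \<sigma>\<^sup>2 / 2)"
proof -
  have Xm[measurable]: "X \<in> borel_measurable M" using D by (simp add: distributed_def)
  show pos: "AE \<omega> in M. X \<omega> > 0"
    by (subst distributed_AE2[OF D]) (auto simp: lognormal_density_def)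
  have "(\<integral>\<^sup>+\<omega>. ennreal (g (X \<omega>)) \<partial>M) = (\<integral>\<^sup>+x. ennreal (lognormal_density \<mu> \<sigma> x) * ennreal (g x) \<partial>lborel)"
    using distributed_nn_integral[OF D, of "\<lambda>x. ennreal (g x)"] by simp
  also have "\<dots> = (\<integral>\<^sup>+x. ennreal (lognormal_density \<mu> \<sigma> x * x powr p) * indicator {0<..} x \<partial>lborel)"
  proof (intro nn_integral_cong)
    fix x :: real
    show "ennreal (lognormal_density \<mu> \<sigma> x) * ennreal (g x) = ennreal (lognormal_density \<mu> \<sigma> x * x powr p) * indicator {0<..} x"
    proof (cases "x > 0")
      case True
      then show ?thesis using lognormal_density_nonneg[OF sig, of \<mu> x]
        by (simp add: gp ennreal_mult[symmetric])
    qed (simp add: lognormal_density_def)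
  qed
  also have "\<dots> = (\<integral>\<^sup>+y. ennreal (lognormal_density \<mu> \<sigma> (exp y) * exp y powr p * exp y) \<partial>lborel)"
    by (subst exp_subst_nn) auto
  also have "\<dots> = (\<integral>\<^sup>+y. ennreal (exp (p * \<mu> + p\<^sup>2 * \<sigma>\<^sup>2 / 2)) * ennreal (normal_density (\<mu> + p * \<sigma>\<^sup>2) \<sigma> y) \<partial>lborel)"
    by (intro nn_integral_cong) (simp add: lognormal_exp_eq[OF sig] ennreal_mult')
  also have "\<dots> = ennreal (exp (p * \<mu> + p\<^sup>2 * \<sigma>\<^sup>2 / 2)) * (\<integral>\<^sup>+y. ennreal (normal_density (\<mu> + p * \<sigma>\<^sup>2) \<sigma> y) \<partial>lborel)"
    by (rule nn_integral_cmult) simp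
  also have "(\<integral>\<^sup>+y. ennreal (normal_density (\<mu> + p * \<sigma>\<^sup>2) \<sigma> y) \<partial>lborel) = 1"
    using sig by (subst nn_integral_eq_integral) auto
  finally have I: "(\<integral>\<^sup>+\<omega>. ennreal (g (X \<omega>)) \<partial>M) = ennreal (exp (p * \<mu> + p\<^sup>2 * \<sigma>\<^sup>2 / 2))" by simp
  have "AE \<omega> in M. 0 \<le> g (X \<omega>)" using pos by eventually_elim (simp add: gp)
  then have "integrable M (\<lambda>\<omega>. g (X \<omega>)) \<and> expectation (\<lambda>\<omega>. g (X \<omega>)) = exp (p * \<mu> + p\<^sup>2 * \<sigma>\<^sup>2 / 2)"
    using I by (subst nn_integral_eq_integrable[symmetric]) auto
  then show "integrable M (\<lambda>\<omega>. g (X \<omega>))" "expectation (\<lambda>\<omega>. g (X \<omega>)) = exp (p * \<mu> + p\<^sup>2 * \<sigma>\<^sup>2 / 2)" by auto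
qed

theorem proposition1:
  fixes M :: "'a measure" and X :: "nat \<Rightarrow> 'a \<Rightarrow> real"
    and \<mu> \<sigma> :: real and n :: nat
  assumes "prob_space M"
    and "\<sigma> > 0" and "n \<ge> 2"
    and "prob_space.indep_vars M (\<lambda>_. borel) X {1..n}"
    and "\<And>i. i \<in> {1..n} \<Longrightarrow> distributed M lborel (X i) (lognormal_density \<mu> \<sigma>)"
  shows "let A = (\<lambda>\<omega>. (\<Sum>i=1..n. X i \<omega>) / real n);
             H = (\<lambda>\<omega>. real n / (\<Sum>i=1..n. 1 / X i \<omega>));
             K = (\<lambda>\<omega>. A \<omega> / H \<omega> - 1);
             \<alpha> = prob_space.expectation M (X 1);
             \<beta> = sqrt (prob_space.variance M (X 1));
             C\<^sub>v = \<beta> / \<alpha>;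
             h = 1 / prob_space.expectation M (\<lambda>\<omega>. 1 / X 1 \<omega>);
             k = \<alpha> / h - 1
         in prob_space.expectation M K = (real n - 1) / real n * k
          \<and> k = C\<^sub>v\<^sup>2 \<and> k = exp (\<sigma>\<^sup>2) - 1"
proof -
  interpret prob_space M by fact
  have sig: "\<sigma> > 0" and D: "\<And>i. i \<in> {1..n} \<Longrightarrow> distributed M lborel (X i) (lognormal_density \<mu> \<sigma>)"
    using assms by auto
  define m1 where "m1 = exp (\<mu> + \<sigma>\<^sup>2 / 2)"
  define mm where "mm = exp (- \<mu> + \<sigma>\<^sup>2 / 2)"
  define m2 where "m2 = exp (2 * \<mu> + 2 * \<sigma>\<^sup>2)"
  have Xm[measurable]: "X i \<in> borel_measurable M" if "i \<in> {1..n}" for i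
    using D[OF that] by (simp add: distributed_def)
  have pos: "AE \<omega> in M. X i \<omega> > 0" if "i \<in> {1..n}" for i
    using lognormal_moment(1)[OF sig D[OF that], of "\<lambda>x. x" 1] by simp
  have int1: "integrable M (X i)" and E1: "expectation (X i) = m1" if "i \<in> {1..n}" for i
    using lognormal_moment(2,3)[OF sig D[OF that], of "\<lambda>x. x" 1] by (auto simp: m1_def)
  have intI: "integrable M (\<lambda>\<omega>. 1 / X i \<omega>)" and EI: "expectation (\<lambda>\<omega>. 1 / X i \<omega>) = mm"
    if "i \<in> {1..n}" for i
    using lognormal_moment(2,3)[OF sig D[OF that], of "\<lambda>x. 1 / x" "-1"]
    by (auto simp: mm_def powr_minus_divide)
  have int2: "integrable M (\<lambda>\<omega>. (X i \<omega>)\<^sup>2)" and E2: "expectation (\<lambda>\<omega>. (X i \<omega>)\<^sup>2) = m2"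
    if "i \<in> {1..n}" for i
    using lognormal_moment(2,3)[OF sig D[OF that], of "\<lambda>x. x\<^sup>2" 2]
    by (auto simp: m2_def powr_numeral)
  have one: "1 \<in> {1..n}" using assms by auto
  have n0: "real n > 0" using assms by auto
  have m1mm: "m1 * mm = exp (\<sigma>\<^sup>2)" unfolding m1_def mm_def mult_exp_exp by (rule arg_cong[where f=exp]) simp
  have var: "variance (X 1) = m2 - m1\<^sup>2"
    using variance_eq[OF int1[OF one] int2[OF one]] E1[OF one] E2[OF one] by simp
  have m2m1: "m2 / m1\<^sup>2 = exp (\<sigma>\<^sup>2)"
    unfolding m1_def m2_def power2_eq_square mult_exp_exp exp_diff[symmetric] by (rule arg_cong[where f=exp]) simp
  have m1pos: "m1 > 0" unfolding m1_def by simp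
  have "0 \<le> variance (X 1)" by (rule integral_nonneg_AE) simp
  then have varnn: "0 \<le> m2 - m1\<^sup>2" using var by linarith
  have Cv: "(sqrt (variance (X 1)) / expectation (X 1))\<^sup>2 = exp (\<sigma>\<^sup>2) - 1"
  proof -
    have "(sqrt (variance (X 1)) / expectation (X 1))\<^sup>2 = (m2 - m1\<^sup>2) / m1\<^sup>2"
      unfolding var unfolding E1[OF one] using varnn by (simp add: power_divide)
    also have "\<dots> = m2 / m1\<^sup>2 - 1" using m1pos by (simp add: diff_divide_distrib)
    finally show ?thesis using m2m1 by simp
  qed
  have kk: "expectation (X 1) / (1 / expectation (\<lambda>\<omega>. 1 / X 1 \<omega>)) - 1 = exp (\<sigma>\<^sup>2) - 1"
    using E1[OF one] EI[OF one] m1mm by simp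
  define T where "T i j \<omega> = X i \<omega> * (1 / X j \<omega>)" for i j \<omega>
  have Tint: "integrable M (T i j) \<and> expectation (T i j) = (if i = j then 1 else exp (\<sigma>\<^sup>2))"
    if ij: "i \<in> {1..n}" "j \<in> {1..n}" for i j
  proof (cases "i = j")
    case True
    have "AE \<omega> in M. T i j \<omega> = 1" using pos[OF ij(1)] by eventually_elim (simp add: T_def True)
    note A = this
    note [measurable] = Xm[OF ij(1)] Xm[OF ij(2)]
    have Tm: "T i j \<in> borel_measurable M" unfolding T_def by measurable
    have "integrable M (T i j) \<longleftrightarrow> integrable M (\<lambda>_. 1::real)"
      by (rule integrable_cong_AE[OF Tm _ A]) simp
    moreover have "expectation (T i j) = expectation (\<lambda>_. 1::real)"
      by (rule integral_cong_AE[OF Tm _ A]) simp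
    ultimately show ?thesis using True by (simp add: prob_space)
  next
    case False
    have ind: "indep_vars (\<lambda>_. borel) (\<lambda>l \<omega>. if l = i then X l \<omega> else 1 / X l \<omega>) {i, j}"
      using indep_vars_compose2[OF indep_vars_subset[OF assms(4)], of "{i,j}" "\<lambda>l x. if l = i then x else 1 / x" "\<lambda>_. borel"] ij
      by (auto split: if_splits)
    have ii: "integrable M (\<lambda>\<omega>. if l = i then X l \<omega> else 1 / X l \<omega>)" if "l \<in> {i,j}" for l
      using that ij int1 intI False by auto
    have "expectation (\<lambda>\<omega>. \<Prod>l\<in>{i,j}. if l = i then X l \<omega> else 1 / X l \<omega>) =
        (\<Prod>l\<in>{i,j}. expectation (\<lambda>\<omega>. if l = i then X l \<omega> else 1 / X l \<omega>))"
      by (rule indep_vars_lebesgue_integral[OF _ ind ii]) auto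
    moreover have "integrable M (\<lambda>\<omega>. \<Prod>l\<in>{i,j}. if l = i then X l \<omega> else 1 / X l \<omega>)"
      by (rule indep_vars_integrable[OF _ ind ii]) auto
    moreover have "(\<lambda>\<omega>. \<Prod>l\<in>{i,j}. if l = i then X l \<omega> else 1 / X l \<omega>) = T i j"
      using False by (auto simp: T_def)
    ultimately show ?thesis using False E1[OF ij(1)] EI[OF ij(2)] m1mm by (simp add: if_distrib cong: if_cong)
  qed
  define K where "K = (\<lambda>\<omega>. ((\<Sum>i=1..n. X i \<omega>) / real n) / (real n / (\<Sum>i=1..n. 1 / X i \<omega>)) - 1)"
  have "AE \<omega> in M. \<forall>i\<in>{1..n}. X i \<omega> > 0"
    using pos by (subst AE_finite_all) auto
  then have AEK: "AE \<omega> in M. K \<omega> = (\<Sum>i=1..n. \<Sum>j=1..n. T i j \<omega>) / (real n)\<^sup>2 - 1"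
  proof eventually_elim
    case (elim \<omega>)
    have S: "(\<Sum>i=1..n. 1 / X i \<omega>) > 0" using elim one by (intro sum_pos) auto
    have "K \<omega> = (\<Sum>i=1..n. X i \<omega>) * (\<Sum>i=1..n. 1 / X i \<omega>) / (real n)\<^sup>2 - 1"
      unfolding K_def using S n0 by (simp add: field_simps power2_eq_square)
    then show ?case by (simp add: sum_product T_def)
  qed
  have "expectation K = expectation (\<lambda>\<omega>. (\<Sum>i=1..n. \<Sum>j=1..n. T i j \<omega>) / (real n)\<^sup>2 - 1)"
  proof (rule integral_cong_AE[OF _ _ AEK])
    show "K \<in> borel_measurable M" unfolding K_def
      by (intro borel_measurable_diff borel_measurable_divide borel_measurable_sum) (auto intro: Xm)
    show "(\<lambda>\<omega>. (\<Sum>i=1..n. \<Sum>j=1..n. T i j \<omega>) / (real n)\<^sup>2 - 1) \<in> borel_measurable M" unfolding T_def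
      by (intro borel_measurable_diff borel_measurable_divide borel_measurable_sum borel_measurable_times) (auto intro: Xm)
  qed
  also have "\<dots> = (\<Sum>i=1..n. \<Sum>j=1..n. expectation (T i j)) / (real n)\<^sup>2 - 1"
  proof -
    have intT: "integrable M (T i j)" if "i \<in> {1..n}" "j \<in> {1..n}" for i j using Tint[OF that] by simp
    have intS1: "integrable M (\<lambda>\<omega>. \<Sum>j=1..n. T i j \<omega>)" if "i \<in> {1..n}" for i
      by (rule Bochner_Integration.integrable_sum, rule intT[OF that])
    have intS: "integrable M (\<lambda>\<omega>. \<Sum>i=1..n. \<Sum>j=1..n. T i j \<omega>)"
      by (rule Bochner_Integration.integrable_sum, erule intS1)
    have ES: "expectation (\<lambda>\<omega>. \<Sum>i=1..n. \<Sum>j=1..n. T i j \<omega>) = (\<Sum>i=1..n. \<Sum>j=1..n. expectation (T i j))"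
      using intS1 intT by (simp add: integral_sum)
    have "expectation (\<lambda>\<omega>. (\<Sum>i=1..n. \<Sum>j=1..n. T i j \<omega>) / (real n)\<^sup>2 - 1) =
        expectation (\<lambda>\<omega>. (\<Sum>i=1..n. \<Sum>j=1..n. T i j \<omega>) / (real n)\<^sup>2) - expectation (\<lambda>_. 1::real)"
      by (rule Bochner_Integration.integral_diff) (rule integrable_divide[OF intS], simp)
    also have "\<dots> = expectation (\<lambda>\<omega>. \<Sum>i=1..n. \<Sum>j=1..n. T i j \<omega>) / (real n)\<^sup>2 - 1"
      by (simp add: prob_space)
    finally show ?thesis unfolding ES .
  qed
  also have "\<dots> = (\<Sum>i=1..n. \<Sum>j=1..n. (if i = j then 1 else exp (\<sigma>\<^sup>2))) / (real n)\<^sup>2 - 1"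
    using Tint by simp
  also have "\<dots> = (real n - 1) / real n * (exp (\<sigma>\<^sup>2) - 1)"
  proof -
    have "(\<Sum>j=1..n. (if i = j then 1 else exp (\<sigma>\<^sup>2))) = real n * exp (\<sigma>\<^sup>2) + (1 - exp (\<sigma>\<^sup>2))"
      if "i \<in> {1..n}" for i
    proof -
      have "(\<Sum>j=1..n. (if i = j then 1 else exp (\<sigma>\<^sup>2))) = (\<Sum>j=1..n. exp (\<sigma>\<^sup>2) + (if i = j then 1 - exp (\<sigma>\<^sup>2) else 0))"
        by (intro sum.cong) auto
      also have "\<dots> = real n * exp (\<sigma>\<^sup>2) + (1 - exp (\<sigma>\<^sup>2))"
        using that by (simp add: sum.distrib)
      finally show ?thesis .
    qed
    then have "(\<Sum>i=1..n. \<Sum>j=1..n. (if i = j then 1 else exp (\<sigma>\<^sup>2))) = real n * (real n * exp (\<sigma>\<^sup>2) + (1 - exp (\<sigma>\<^sup>2)))"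
      by simp
    moreover have "x * (x * e + (1 - e)) / x\<^sup>2 - 1 = (x - 1) / x * (e - 1)" if "x > 0" for x e :: real
      using that by (simp add: field_simps power2_eq_square)
    ultimately show ?thesis using n0 by simp
  qed
  finally have EK: "expectation K = (real n - 1) / real n * (exp (\<sigma>\<^sup>2) - 1)" .
  show ?thesis unfolding Let_def using EK kk Cv by (simp add: K_def)

qed

end
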